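(* Let $\mathcal C$ be a $C^2$ convex curve with total curvature satisfying $\int_{\mathcal C}\kappa\,ds\le\pi$ that intersects a circle of radius $R$ in three or more points. Then there is a point on $\mathcal C$ with curvature $\kappa=1/R$.
   Context: Curves are of class $C^2$ with nonvanishing first and second derivative vectors, oriented so that the curvature $\kappa$ is positive (convex curves). $s$ denotes arclength and $\int_{\mathcal C}\kappa\,ds$ is the total curvature, i.e. the total change of the angle of the tangent vector along $\mathcal C$. *)

theory Defs
  imports "HOL-Analysis.Analysis"
begin

text \<open>Plane curves are maps real => complex on a parameter interval [a,b].
  Given first and second derivative vectors g1 = g', g2 = g'', the signed curvature is
  (x'y'' - y'x'') / |g'|^3.\<close>

definition curvature :: "(real \<Rightarrow> complex) \<Rightarrow> (real \<Rightarrow> complex) \<Rightarrow> real \<Rightarrow> real" where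
  "curvature g1 g2 t =
     (Re (g1 t) * Im (g2 t) - Im (g1 t) * Re (g2 t)) / (norm (g1 t)) ^ 3"

definition convex_C2_curve ::
  "(real \<Rightarrow> complex) \<Rightarrow> (real \<Rightarrow> complex) \<Rightarrow> (real \<Rightarrow> complex) \<Rightarrow> real \<Rightarrow> real \<Rightarrow> bool" where
  "convex_C2_curve g g1 g2 a b \<longleftrightarrow>
     a < b \<and>
     (\<forall>t\<in>{a..b}. (g has_vector_derivative g1 t) (at t within {a..b})) \<and>
     (\<forall>t\<in>{a..b}. (g1 has_vector_derivative g2 t) (at t within {a..b})) \<and>
     continuous_on {a..b} g2 \<and>
     (\<forall>t\<in>{a..b}. g1 t \<noteq> 0 \<and> g2 t \<noteq> 0) \<and>
     (\<forall>t\<in>{a..b}. curvature g1 g2 t > 0)"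

definition total_curvature ::
  "(real \<Rightarrow> complex) \<Rightarrow> (real \<Rightarrow> complex) \<Rightarrow> real \<Rightarrow> real \<Rightarrow> real" where
  "total_curvature g1 g2 a b = integral {a..b} (\<lambda>t. curvature g1 g2 t * norm (g1 t))"

end

theory Submission
  imports Defs
begin

lemma sin_shift_norm:
  fixes x :: real
  assumes "sin x > 0"
  obtains n :: int where "0 < x - 2*pi*n" "x - 2*pi*n < pi"
proof -
  define n where "n = \<lfloor>x / (2*pi)\<rfloor>"
  have "real_of_int n \<le> x/(2*pi)" "x/(2*pi) < real_of_int n + 1" unfolding n_def by linarith+
  then have a: "2*pi*n \<le> x" "x < 2*pi*n + 2*pi" using pi_gt_zero by (auto simp: field_simps)
  have s: "sin (x - 2*pi*n) = sin x"
    using cos_int_2pin[of n] sin_int_2pin[of n] by (simp add: sin_diff mult.assoc)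
  show ?thesis
  proof (rule that)
    show "0 < x - 2*pi*n"
    proof (rule ccontr)
      assume "\<not> ?thesis" then have "x - 2*pi*n = 0" using a by linarith
      then show False using s assms by simp
    qed
    show "x - 2*pi*n < pi"
    proof (rule ccontr)
      assume "\<not> ?thesis"
      then have "sin (x - 2*pi*n) \<le> 0" using a sin_le_zero[of "x - 2*pi*n"] by linarith
      then show False using s assms by simp
    qed
  qed
qed

lemma sin_diff_2pin: "sin (y - 2*pi*real_of_int n) = sin y"
  using cos_int_2pin[of n] sin_int_2pin[of n] by (simp add: sin_diff mult.assoc)

lemma normalize_angles:
  fixes b1 b2 e :: real
  assumes "sin (b1 + e) > 0" "sin (b2 - e) > 0" "0 < b1 + b2" "b1 + b2 < pi"
  obtains x y where "0 < x" "x < pi" "0 < y" "y < pi" "x + y = b1 + b2"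
    "sin x = sin (b1 + e)" "sin y = sin (b2 - e)"
proof -
  obtain n :: int where n: "0 < b1 + e - 2*pi*n" "b1 + e - 2*pi*n < pi"
    using sin_shift_norm[OF assms(1)] by blast
  define x where "x = b1 + e - 2*pi*n"
  define y where "y = b2 - e + 2*pi*n"
  have sx: "sin x = sin (b1 + e)" unfolding x_def by (rule sin_diff_2pin)
  have sy: "sin y = sin (b2 - e)" unfolding y_def
    using sin_diff_2pin[of "b2 - e" "-n"] by simp
  have xy: "x + y = b1 + b2" unfolding x_def y_def by simp
  have y1: "- pi < y" "y < pi" using n xy assms unfolding x_def by linarith+
  have "0 < y"
  proof (rule ccontr)
    assume "\<not> 0 < y"
    then have "sin y \<le> 0" using y1 sin_ge_zero[of "-y"] by simp
    then show False using sy assms by simp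
  qed
  then show ?thesis using that[of x y] n sx sy xy y1 unfolding x_def by simp
qed

lemma steep_half:
  fixes x b d R L :: real
  assumes "0 < b" "b < d" "b \<le> x" "x < pi" "x < b + pi - d" "R > 0"
    and L: "L = 2 * R * sin x"
    and S1: "cos b \<ge> 0 \<Longrightarrow> L < 2 * R * sin b"
    and S2: "cos (d - b) \<ge> 0 \<Longrightarrow> L < 2 * R * sin (d - b)"
  shows False
proof (cases "x \<le> pi/2")
  case True
  have "cos b \<ge> 0" using assms True by (intro cos_ge_zero) auto
  then have "sin x < sin b" using S1 L assms by simp
  moreover have "sin b \<le> sin x" using assms True by (intro sin_monotone_2pi_le) auto
  ultimately show False by simp
next
  case False
  have "cos (d - b) \<ge> 0" using assms False by (intro cos_ge_zero) auto
  then have "sin x < sin (d - b)" using S2 L assms by simp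
  moreover have "sin (d - b) \<le> sin (pi - x)" using assms False by (intro sin_monotone_2pi_le) auto
  ultimately show False by simp
qed

lemma steep_final:
  fixes d1 d2 b1 b2 e R L1 L2 :: real
  assumes "0 < d1" "0 < d2" "d1 + d2 \<le> pi" "0 < b1" "b1 < d1" "0 < b2" "b2 < d2" "R > 0"
    and L1: "L1 = 2 * R * sin (b1 + e)" and L2: "L2 = 2 * R * sin (b2 - e)" and "L1 > 0" "L2 > 0"
    and S1: "cos b1 \<ge> 0 \<Longrightarrow> L1 < 2 * R * sin b1"
    and S2: "cos (d1 - b1) \<ge> 0 \<Longrightarrow> L1 < 2 * R * sin (d1 - b1)"
    and S3: "cos b2 \<ge> 0 \<Longrightarrow> L2 < 2 * R * sin b2"
    and S4: "cos (d2 - b2) \<ge> 0 \<Longrightarrow> L2 < 2 * R * sin (d2 - b2)"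
  shows False
proof -
  have "sin (b1 + e) > 0" using L1 \<open>L1 > 0\<close> \<open>R > 0\<close> by (simp add: zero_less_mult_iff)
  moreover have "sin (b2 - e) > 0" using L2 \<open>L2 > 0\<close> \<open>R > 0\<close> by (simp add: zero_less_mult_iff)
  ultimately obtain x y where xy: "0 < x" "x < pi" "0 < y" "y < pi" "x + y = b1 + b2"
    "sin x = sin (b1 + e)" "sin y = sin (b2 - e)"
    using normalize_angles[of b1 e b2] assms by auto
  show False
  proof (cases "b1 \<le> x")
    case True
    show False
      by (rule steep_half[where x=x and b=b1 and d=d1 and R=R and L=L1]) (use assms xy True in auto)
  next
    case False
    show False
      by (rule steep_half[where x=y and b=b2 and d=d2 and R=R and L=L2]) (use assms xy False in auto)
  qed
qed

lemma flat_half: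
  fixes x b d R L :: real
  assumes "0 < b" "b < d" "d \<le> pi" "0 < x" "x \<le> b" "R > 0"
    and L: "L = 2 * R * sin x"
    and F: "L * sin (d - b) > R * (1 - cos d)"
  shows False
proof -
  have sdb: "sin (d - b) > 0" using assms by (intro sin_gt_zero) auto
  have "sin b < sin x"
  proof (rule ccontr)
    assume "\<not> ?thesis"
    then have "sin x * sin (d - b) \<le> sin b * sin (d - b)" using sdb by (intro mult_right_mono) auto
    also have "\<dots> = (cos (2*b - d) - cos d) / 2" by (simp add: sin_times_sin algebra_simps)
    also have "\<dots> \<le> (1 - cos d)/2" by simp
    finally have "L * sin (d - b) \<le> R * (1 - cos d)" using L \<open>R > 0\<close>
      by (simp add: mult.assoc)
    then show False using F by simp
  qed
  have "b < pi/2"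
  proof (rule ccontr)
    assume nb: "\<not> ?thesis"
    have "sin (d - b) \<le> sin (d - pi/2)" using assms nb by (intro sin_monotone_2pi_le) auto
    also have "\<dots> = - cos d" by (simp add: sin_diff)
    finally have s1: "sin (d - b) \<le> - cos d" .
    have "L \<le> 2 * R" using L \<open>R > 0\<close> by simp
    then have "L * sin (d - b) \<le> 2 * R * sin (d - b)" using sdb by (intro mult_right_mono) auto
    also have "\<dots> \<le> 2 * R * (- cos d)" using s1 \<open>R > 0\<close> by (intro mult_left_mono) auto
    finally have "R * (1 - cos d) < 2 * R * (-cos d)" using F by simp
    then have "R * (1 + cos d) < 0" by (simp add: algebra_simps)
    then have "1 + cos d < 0" using \<open>R > 0\<close> by (simp add: mult_less_0_iff)
    then show False using cos_ge_minus_one[of d] by simp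
  qed
  have "sin x \<le> sin b" using assms \<open>b < pi/2\<close> by (intro sin_monotone_2pi_le) auto
  then show False using \<open>sin b < sin x\<close> by simp
qed

lemma flat_final:
  fixes d1 d2 b1 b2 e R L1 L2 :: real
  assumes "0 < d1" "0 < d2" "d1 + d2 \<le> pi" "0 < b1" "b1 < d1" "0 < b2" "b2 < d2" "R > 0"
    and L1: "L1 = 2 * R * sin (b1 + e)" and L2: "L2 = 2 * R * sin (b2 - e)" and "L1 > 0" "L2 > 0"
    and F1: "L1 * sin (d1 - b1) > R * (1 - cos d1)"
    and F2: "L2 * sin (d2 - b2) > R * (1 - cos d2)"
  shows False
proof -
  have "sin (b1 + e) > 0" using L1 \<open>L1 > 0\<close> \<open>R > 0\<close> by (simp add: zero_less_mult_iff)
  moreover have "sin (b2 - e) > 0" using L2 \<open>L2 > 0\<close> \<open>R > 0\<close> by (simp add: zero_less_mult_iff)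
  ultimately obtain x y where xy: "0 < x" "x < pi" "0 < y" "y < pi" "x + y = b1 + b2"
    "sin x = sin (b1 + e)" "sin y = sin (b2 - e)"
    using normalize_angles[of b1 e b2] assms by auto
  show False
  proof (cases "x \<le> b1")
    case True
    show False
      by (rule flat_half[where x=x and b=b1 and d=d1 and R=R and L=L1]) (use assms xy True in auto)
  next
    case False
    show False
      by (rule flat_half[where x=y and b=b2 and d=d2 and R=R and L=L2]) (use assms xy False in auto)
  qed
qed


definition angsetup :: "(real \<Rightarrow> complex) \<Rightarrow> (real \<Rightarrow> real) \<Rightarrow> (real \<Rightarrow> real) \<Rightarrow> (real \<Rightarrow> real) \<Rightarrow> real \<Rightarrow> real \<Rightarrow> bool" where
  "angsetup G ph sp k a b \<longleftrightarrow>
     (\<forall>t\<in>{a..b}. (G has_vector_derivative (complex_of_real (sp t) * cis (ph t))) (at t within {a..b})) \<and>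
     (\<forall>t\<in>{a..b}. (ph has_real_derivative (k t * sp t)) (at t within {a..b})) \<and>
     (\<forall>t\<in>{a..b}. 0 < sp t \<and> 0 < k t)"

definition hfun :: "(real \<Rightarrow> complex) \<Rightarrow> (real \<Rightarrow> real) \<Rightarrow> real \<Rightarrow> real \<Rightarrow> real \<Rightarrow> real" where
  "hfun G ph psi r t = Im (G t * cis (- psi)) + r * cos (ph t - psi)"

lemma hfun_deriv:
  assumes "angsetup G ph sp k a b" "t \<in> {a..b}"
  shows "(hfun G ph psi r has_real_derivative (sp t * (1 - r * k t) * sin (ph t - psi))) (at t within {a..b})"
proof -
  have dG: "(G has_vector_derivative (complex_of_real (sp t) * cis (ph t))) (at t within {a..b})"
    and dph: "(ph has_real_derivative (k t * sp t)) (at t within {a..b})"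
    using assms unfolding angsetup_def by auto
  have d1: "((\<lambda>t. G t * cis (- psi)) has_vector_derivative (complex_of_real (sp t) * cis (ph t) * cis (-psi))) (at t within {a..b})"
    by (rule has_vector_derivative_mult_left[OF dG])
  have d2: "((\<lambda>t. Im (G t * cis (- psi))) has_real_derivative Im (complex_of_real (sp t) * cis (ph t) * cis (-psi))) (at t within {a..b})"
    by (rule has_field_derivative_Im[OF d1])
  have d3: "((\<lambda>t. r * cos (ph t - psi)) has_real_derivative (r * (- sin (ph t - psi) * (k t * sp t)))) (at t within {a..b})"
    by (auto intro!: derivative_eq_intros dph)
  have "(hfun G ph psi r has_real_derivative (Im (complex_of_real (sp t) * cis (ph t) * cis (-psi)) + r * (- sin (ph t - psi) * (k t * sp t)))) (at t within {a..b})"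
    unfolding hfun_def by (rule DERIV_add[OF d2 d3])
  moreover have "Im (complex_of_real (sp t) * cis (ph t) * cis (-psi)) + r * (- sin (ph t - psi) * (k t * sp t)) = sp t * (1 - r * k t) * sin (ph t - psi)"
    by (simp add: mult.assoc cis_mult algebra_simps sin_diff)
  ultimately show ?thesis by simp
qed

lemma angsetup_cont_h:
  assumes "angsetup G ph sp k a b"
  shows "continuous_on {a..b} (hfun G ph psi r)"
  using hfun_deriv[OF assms] DERIV_continuous
  by (metis continuous_on_eq_continuous_within)

lemma angsetup_cont_ph:
  assumes "angsetup G ph sp k a b"
  shows "continuous_on {a..b} ph"
  using assms DERIV_continuous unfolding angsetup_def
  by (metis continuous_on_eq_continuous_within)

lemma hfun_mono_strict:
  assumes S: "angsetup G ph sp k a b" and "a \<le> ta" "ta < tb" "tb \<le> b"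
    and pos: "\<And>t. ta < t \<Longrightarrow> t < tb \<Longrightarrow> sp t * (1 - r * k t) * sin (ph t - psi) > 0"
  shows "hfun G ph psi r ta < hfun G ph psi r tb"
proof (rule DERIV_pos_imp_increasing_open[of ta tb "hfun G ph psi r"])
  show "ta < tb" by fact
  fix x assume x: "ta < x" "x < tb"
  then have "x \<in> {a..b}" using assms by auto
  from hfun_deriv[OF S this, of psi r] have "(hfun G ph psi r has_real_derivative (sp x * (1 - r * k x) * sin (ph x - psi))) (at x)"
    using at_within_Icc_at[of a x b] x assms by auto
  then show "\<exists>y. (hfun G ph psi r has_real_derivative y) (at x) \<and> 0 < y" using pos[OF x] by blast
next
  show "continuous_on {ta..tb} (hfun G ph psi r)"
    using angsetup_cont_h[OF S] by (rule continuous_on_subset) (use assms in auto)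
qed

lemma hfun_mono_nonneg:
  assumes S: "angsetup G ph sp k a b" and "a \<le> ta" "ta \<le> tb" "tb \<le> b"
    and pos: "\<And>t. ta < t \<Longrightarrow> t < tb \<Longrightarrow> sp t * (1 - r * k t) * sin (ph t - psi) \<ge> 0"
  shows "hfun G ph psi r ta \<le> hfun G ph psi r tb"
proof (rule DERIV_nonneg_imp_increasing_open[of ta tb "hfun G ph psi r"])
  show "ta \<le> tb" by fact
  fix x assume x: "ta < x" "x < tb"
  then have "x \<in> {a..b}" using assms by auto
  from hfun_deriv[OF S this, of psi r] have "(hfun G ph psi r has_real_derivative (sp x * (1 - r * k x) * sin (ph x - psi))) (at x)"
    using at_within_Icc_at[of a x b] x assms by auto
  then show "\<exists>y. (hfun G ph psi r has_real_derivative y) (at x) \<and> 0 \<le> y" using pos[OF x] by blast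
next
  show "continuous_on {ta..tb} (hfun G ph psi r)"
    using angsetup_cont_h[OF S] by (rule continuous_on_subset) (use assms in auto)
qed

lemma hfun_shift: "hfun G ph (psi + pi) r t = - hfun G ph psi r t"
  unfolding hfun_def
  by (simp add: cis_mult[symmetric] minus_cis[symmetric] algebra_simps cos_diff sin_diff)

lemma hfun_mono_strict_neg:
  assumes S: "angsetup G ph sp k a b" and "a \<le> ta" "ta < tb" "tb \<le> b"
    and neg: "\<And>t. ta < t \<Longrightarrow> t < tb \<Longrightarrow> sp t * (1 - r * k t) * sin (ph t - psi) < 0"
  shows "hfun G ph psi r tb < hfun G ph psi r ta"
proof -
  have "hfun G ph (psi + pi) r ta < hfun G ph (psi + pi) r tb"
  proof (rule hfun_mono_strict[OF S assms(2-4)])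
    fix t assume "ta < t" "t < tb"
    have "sin (ph t - (psi + pi)) = - sin (ph t - psi)" by (simp add: sin_diff)
    then show "sp t * (1 - r * k t) * sin (ph t - (psi + pi)) > 0" using neg[OF \<open>ta < t\<close> \<open>t < tb\<close>] by simp
  qed
  then show ?thesis by (simp add: hfun_shift)
qed

lemma hfun_mono_nonpos:
  assumes S: "angsetup G ph sp k a b" and "a \<le> ta" "ta \<le> tb" "tb \<le> b"
    and neg: "\<And>t. ta < t \<Longrightarrow> t < tb \<Longrightarrow> sp t * (1 - r * k t) * sin (ph t - psi) \<le> 0"
  shows "hfun G ph psi r tb \<le> hfun G ph psi r ta"
proof -
  have "hfun G ph (psi + pi) r ta \<le> hfun G ph (psi + pi) r tb"
  proof (rule hfun_mono_nonneg[OF S assms(2-4)])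
    fix t assume "ta < t" "t < tb"
    have "sin (ph t - (psi + pi)) = - sin (ph t - psi)" by (simp add: sin_diff)
    then show "sp t * (1 - r * k t) * sin (ph t - (psi + pi)) \<ge> 0" using neg[OF \<open>ta < t\<close> \<open>t < tb\<close>] by simp
  qed
  then show ?thesis by (simp add: hfun_shift)
qed

lemma angsetup_ph_strict:
  assumes S: "angsetup G ph sp k a b" and "a \<le> ta" "ta < tb" "tb \<le> b"
  shows "ph ta < ph tb"
proof (rule DERIV_pos_imp_increasing_open[of ta tb ph])
  show "ta < tb" by fact
  fix x assume x: "ta < x" "x < tb"
  then have xi: "x \<in> {a..b}" using assms by auto
  have "(ph has_real_derivative (k x * sp x)) (at x within {a..b})"
    using S xi unfolding angsetup_def by auto
  then have "(ph has_real_derivative (k x * sp x)) (at x)"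
    using at_within_Icc_at[of a x b] x assms by auto
  moreover have "k x * sp x > 0" using S xi unfolding angsetup_def by auto
  ultimately show "\<exists>y. (ph has_real_derivative y) (at x) \<and> 0 < y" by blast
next
  show "continuous_on {ta..tb} ph"
    using angsetup_cont_ph[OF S] by (rule continuous_on_subset) (use assms in auto)
qed


lemma sin_neg_open: "- pi < x \<Longrightarrow> x < 0 \<Longrightarrow> sin x < 0"
  using sin_gt_zero[of "-x"] by simp

lemma cos_nonneg_le_half: "0 < x \<Longrightarrow> x < pi \<Longrightarrow> cos x \<ge> 0 \<Longrightarrow> x \<le> pi/2"
proof (rule ccontr)
  assume "0 < x" "x < pi" "cos x \<ge> 0" "\<not> x \<le> pi/2"
  then have "cos (pi - x) > 0" by (intro cos_gt_zero) auto
  then show False using \<open>cos x \<ge> 0\<close> by simp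
qed

lemma Im_chord:
  assumes "Gb - Ga = complex_of_real L * cis x"
  shows "Im (Gb * cis y) = Im (Ga * cis y) + L * sin (x + y)"
proof -
  have "Gb = Ga + complex_of_real L * cis x" using assms by (simp add: algebra_simps)
  then show ?thesis by (simp add: distrib_right mult.assoc cis_mult)
qed

lemma chord_ori:
  assumes S: "angsetup G ph sp k a b" and ab: "a \<le> ta" "ta < tb" "tb \<le> b"
    and D: "ph tb - ph ta < pi"
    and ch: "G tb - G ta = complex_of_real L * cis (ph tb - \<beta>)" and L: "L > 0"
  shows "sin \<beta> > 0 \<and> sin (ph tb - ph ta - \<beta>) > 0"
proof -
  have phm: "ph ta < ph t \<and> ph t < ph tb" if "ta < t" "t < tb" for t
    using angsetup_ph_strict[OF S, of ta t] angsetup_ph_strict[OF S, of t tb] ab that by auto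
  have spos: "sp t > 0" if "ta < t" "t < tb" for t
    using S ab that unfolding angsetup_def by auto
  have "hfun G ph (ph tb) 0 tb < hfun G ph (ph tb) 0 ta"
  proof (rule hfun_mono_strict_neg[OF S ab])
    fix t assume t: "ta < t" "t < tb"
    have "sin (ph t - ph tb) < 0" using phm[OF t] D by (intro sin_neg_open) auto
    then show "sp t * (1 - 0 * k t) * sin (ph t - ph tb) < 0" using spos[OF t] by (simp add: mult_pos_neg)
  qed
  then have "Im (G tb * cis (- ph tb)) < Im (G ta * cis (- ph tb))" by (simp add: hfun_def)
  then have "L * sin (- \<beta>) < 0" using Im_chord[OF ch, of "- ph tb"] by simp
  then have 1: "sin \<beta> > 0" using L by (simp add: zero_less_mult_iff)
  have "hfun G ph (ph ta) 0 ta < hfun G ph (ph ta) 0 tb"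
  proof (rule hfun_mono_strict[OF S ab])
    fix t assume t: "ta < t" "t < tb"
    have "sin (ph t - ph ta) > 0" using phm[OF t] D by (intro sin_gt_zero) auto
    then show "sp t * (1 - 0 * k t) * sin (ph t - ph ta) > 0" using spos[OF t] by simp
  qed
  then have "Im (G ta * cis (- ph ta)) < Im (G tb * cis (- ph ta))" by (simp add: hfun_def)
  then have "L * sin (ph tb - \<beta> - ph ta) > 0" using Im_chord[OF ch, of "- ph ta"] by simp
  then have "sin (ph tb - ph ta - \<beta>) > 0" using L by (simp add: zero_less_mult_iff algebra_simps)
  with 1 show ?thesis by simp
qed

lemma chord_flat:
  assumes S: "angsetup G ph sp k a b" and ab: "a \<le> ta" "ta < tb" "tb \<le> b"
    and D: "ph tb - ph ta < pi"
    and ch: "G tb - G ta = complex_of_real L * cis (ph tb - \<beta>)"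
    and flat: "\<forall>t\<in>{a..b}. R * k t < 1"
  shows "L * sin \<beta> > R * (1 - cos (ph tb - ph ta)) \<and> L * sin (ph tb - ph ta - \<beta>) > R * (1 - cos (ph tb - ph ta))"
proof -
  have phm: "ph ta < ph t \<and> ph t < ph tb" if "ta < t" "t < tb" for t
    using angsetup_ph_strict[OF S, of ta t] angsetup_ph_strict[OF S, of t tb] ab that by auto
  have spos: "sp t * (1 - R * k t) > 0" if "ta < t" "t < tb" for t
    using S ab that flat unfolding angsetup_def by auto
  have "hfun G ph (ph tb) R tb < hfun G ph (ph tb) R ta"
  proof (rule hfun_mono_strict_neg[OF S ab])
    fix t assume t: "ta < t" "t < tb"
    have "sin (ph t - ph tb) < 0" using phm[OF t] D by (intro sin_neg_open) auto
    then show "sp t * (1 - R * k t) * sin (ph t - ph tb) < 0" using spos[OF t] by (simp add: mult_pos_neg)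
  qed
  then have "Im (G tb * cis (- ph tb)) + R < Im (G ta * cis (- ph tb)) + R * cos (ph ta - ph tb)" by (simp add: hfun_def)
  then have "L * sin (- \<beta>) + R < R * cos (ph tb - ph ta)" using Im_chord[OF ch, of "- ph tb"]
    by (simp add: cos_diff mult.commute)
  then have 1: "L * sin \<beta> > R * (1 - cos (ph tb - ph ta))" by (simp add: algebra_simps)
  have "hfun G ph (ph ta) R ta < hfun G ph (ph ta) R tb"
  proof (rule hfun_mono_strict[OF S ab])
    fix t assume t: "ta < t" "t < tb"
    have "sin (ph t - ph ta) > 0" using phm[OF t] D by (intro sin_gt_zero) auto
    then show "sp t * (1 - R * k t) * sin (ph t - ph ta) > 0" using spos[OF t] by simp
  qed
  then have "Im (G ta * cis (- ph ta)) + R < Im (G tb * cis (- ph ta)) + R * cos (ph tb - ph ta)" by (simp add: hfun_def)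
  then have "R < L * sin (ph tb - ph ta - \<beta>) + R * cos (ph tb - ph ta)" using Im_chord[OF ch, of "- ph ta"]
    by (simp add: algebra_simps)
  then have 2: "L * sin (ph tb - ph ta - \<beta>) > R * (1 - cos (ph tb - ph ta))" by (simp add: algebra_simps)
  from 1 2 show ?thesis by simp
qed


lemma chord_steep_end:
  assumes S: "angsetup G ph sp k a b" and ab: "a \<le> ta" "ta < tb" "tb \<le> b"
    and D: "ph tb - ph ta < pi"
    and ch: "G tb - G ta = complex_of_real L * cis (ph tb - \<beta>)"
    and steep: "\<forall>t\<in>{a..b}. R * k t > 1" and R: "R > 0"
    and bt: "0 < \<beta>" "\<beta> < ph tb - ph ta" and cb: "cos \<beta> \<ge> 0"
  shows "L < 2 * R * sin \<beta>"
proof -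
  have phs: "ph x < ph y" if "ta \<le> x" "x < y" "y \<le> tb" for x y
    using angsetup_ph_strict[OF S, of x y] ab that by auto
  have b2: "\<beta> \<le> pi/2" using cos_nonneg_le_half[of \<beta>] bt D cb by auto
  define psi where "psi = ph tb - 2 * \<beta>"
  obtain ts where ts: "ta \<le> ts" "ts < tb" "psi \<le> ph ts"
    "Im (G ts * cis (- psi)) \<le> Im (G ta * cis (- psi))"
  proof (cases "ph ta \<le> psi")
    case True
    have "continuous_on {ta..tb} ph"
      using angsetup_cont_ph[OF S] by (rule continuous_on_subset) (use ab in auto)
    then obtain ts where ts: "ta \<le> ts" "ts \<le> tb" "ph ts = psi"
      using IVT'[of ph ta psi tb] True bt ab unfolding psi_def by auto
    have "ts \<noteq> tb" using ts bt unfolding psi_def by auto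
    with ts have tsb: "ts < tb" by simp
    have "hfun G ph psi 0 ts \<le> hfun G ph psi 0 ta"
    proof (rule hfun_mono_nonpos[OF S])
      show "a \<le> ta" "ta \<le> ts" "ts \<le> b" using ts ab by auto
      fix t assume t: "ta < t" "t < ts"
      have "ph t < ph ts" "ph ta < ph t" using phs[of t ts] phs[of ta t] t tsb by auto
      then have "sin (ph t - psi) < 0" using ts D bt unfolding psi_def by (intro sin_neg_open) auto
      moreover have "sp t > 0" using S ab t tsb unfolding angsetup_def by auto
      ultimately show "sp t * (1 - 0 * k t) * sin (ph t - psi) \<le> 0" by (simp add: mult_le_0_iff)
    qed
    then show ?thesis using that[of ts] ts tsb by (simp add: hfun_def)
  next
    case False
    then show ?thesis using that[of ta] ab by auto
  qed
  have "hfun G ph psi R tb < hfun G ph psi R ts"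
  proof (rule hfun_mono_strict_neg[OF S])
    show "a \<le> ts" "ts < tb" "tb \<le> b" using ts ab by auto
    fix t assume t: "ts < t" "t < tb"
    have "ph ts < ph t" "ph t < ph tb" using phs[of ts t] phs[of t tb] t ts by auto
    then have "sin (ph t - psi) > 0" using ts b2 unfolding psi_def by (intro sin_gt_zero) auto
    moreover have "sp t * (1 - R * k t) < 0" using S ab t ts steep unfolding angsetup_def
      by (auto simp: mult_pos_neg)
    ultimately show "sp t * (1 - R * k t) * sin (ph t - psi) < 0" by (simp add: mult_neg_pos)
  qed
  then have "Im (G tb * cis (- psi)) + R * cos (ph tb - psi) < Im (G ts * cis (- psi)) + R * cos (ph ts - psi)"
    by (simp add: hfun_def)
  also have "\<dots> \<le> Im (G ta * cis (- psi)) + R"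
    using ts(4) R mult_left_mono[OF cos_le_one[of "ph ts - psi"], of R] by linarith
  finally have "Im (G tb * cis (- psi)) + R * cos (ph tb - psi) < Im (G ta * cis (- psi)) + R" .
  then have "L * sin \<beta> + R * cos (2 * \<beta>) < R" using Im_chord[OF ch, of "- psi"] unfolding psi_def by simp
  then have "L * sin \<beta> + R * (1 - 2 * sin \<beta> ^ 2) < R" unfolding cos_double_sin .
  then have "L * sin \<beta> < R * (2 * sin \<beta> ^ 2)" by (simp add: algebra_simps)
  then have "L * sin \<beta> < (2 * R * sin \<beta>) * sin \<beta>" by (simp add: power2_eq_square algebra_simps)
  moreover have "sin \<beta> > 0" using bt D by (intro sin_gt_zero) auto
  ultimately show ?thesis by simp
qed

lemma chord_steep_start:
  assumes S: "angsetup G ph sp k a b" and ab: "a \<le> ta" "ta < tb" "tb \<le> b"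
    and D: "ph tb - ph ta < pi"
    and ch: "G tb - G ta = complex_of_real L * cis (ph tb - \<beta>)"
    and steep: "\<forall>t\<in>{a..b}. R * k t > 1" and R: "R > 0"
    and bt: "0 < \<beta>" "\<beta> < ph tb - ph ta" and cb: "cos (ph tb - ph ta - \<beta>) \<ge> 0"
  shows "L < 2 * R * sin (ph tb - ph ta - \<beta>)"
proof -
  define c where "c = ph tb - ph ta - \<beta>"
  have c0: "0 < c" "c < ph tb - ph ta" using bt unfolding c_def by auto
  have phs: "ph x < ph y" if "ta \<le> x" "x < y" "y \<le> tb" for x y
    using angsetup_ph_strict[OF S, of x y] ab that by auto
  have c2: "c \<le> pi/2" using cos_nonneg_le_half[of c] c0 D cb unfolding c_def by auto
  define psi where "psi = ph ta + 2 * c"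
  obtain ts where ts: "ta < ts" "ts \<le> tb" "ph ts \<le> psi"
    "Im (G ts * cis (- psi)) \<le> Im (G tb * cis (- psi))"
  proof (cases "psi \<le> ph tb")
    case True
    have "continuous_on {ta..tb} ph"
      using angsetup_cont_ph[OF S] by (rule continuous_on_subset) (use ab in auto)
    then obtain ts where ts: "ta \<le> ts" "ts \<le> tb" "ph ts = psi"
      using IVT'[of ph ta psi tb] True c0 ab unfolding psi_def by auto
    have "ts \<noteq> ta" using ts c0 unfolding psi_def by auto
    with ts have tsa: "ta < ts" by simp
    have "hfun G ph psi 0 ts \<le> hfun G ph psi 0 tb"
    proof (rule hfun_mono_nonneg[OF S])
      show "a \<le> ts" "ts \<le> tb" "tb \<le> b" using ts ab by auto
      fix t assume t: "ts < t" "t < tb"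
      have "ph ts < ph t" "ph t < ph tb" using phs[of ts t] phs[of t tb] t tsa ts by auto
      then have "sin (ph t - psi) > 0" using ts D c0 unfolding psi_def by (intro sin_gt_zero) auto
      moreover have "sp t > 0" using S ab t tsa ts unfolding angsetup_def by auto
      ultimately show "sp t * (1 - 0 * k t) * sin (ph t - psi) \<ge> 0" by simp
    qed
    then show ?thesis using that[of ts] ts tsa by (simp add: hfun_def)
  next
    case False
    then show ?thesis using that[of tb] ab by auto
  qed
  have "hfun G ph psi R ta < hfun G ph psi R ts"
  proof (rule hfun_mono_strict[OF S])
    show "a \<le> ta" "ta < ts" "ts \<le> b" using ts ab by auto
    fix t assume t: "ta < t" "t < ts"
    have "ph ta < ph t" "ph t < ph ts" using phs[of ta t] phs[of t ts] t ts by auto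
    then have "sin (ph t - psi) < 0" using ts c2 unfolding psi_def by (intro sin_neg_open) auto
    moreover have "sp t * (1 - R * k t) < 0" using S ab t ts steep unfolding angsetup_def
      by (auto simp: mult_pos_neg)
    ultimately show "sp t * (1 - R * k t) * sin (ph t - psi) > 0" by (simp add: mult_neg_neg)
  qed
  then have "Im (G ta * cis (- psi)) + R * cos (ph ta - psi) < Im (G ts * cis (- psi)) + R * cos (ph ts - psi)"
    by (simp add: hfun_def)
  also have "\<dots> \<le> Im (G tb * cis (- psi)) + R"
    using ts(4) R mult_left_mono[OF cos_le_one[of "ph ts - psi"], of R] by linarith
  finally have "Im (G ta * cis (- psi)) + R * cos (ph ta - psi) < Im (G tb * cis (- psi)) + R" .
  moreover have "Im (G tb * cis (- psi)) = Im (G ta * cis (- psi)) + L * sin (ph tb - \<beta> + - psi)"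
    by (rule Im_chord[OF ch])
  moreover have "ph tb - \<beta> + - psi = - c" unfolding psi_def c_def by simp
  moreover have "ph ta - psi = - (2 * c)" unfolding psi_def by simp
  ultimately have "R * cos (2 * c) < - L * sin c + R" by simp
  then have "R * (1 - 2 * sin c ^ 2) < - L * sin c + R" unfolding cos_double_sin .
  then have "L * sin c < R * (2 * sin c ^ 2)" by (simp add: algebra_simps)
  then have "L * sin c < (2 * R * sin c) * sin c" by (simp add: power2_eq_square algebra_simps)
  moreover have "sin c > 0" using c0 D by (intro sin_gt_zero) auto
  ultimately show ?thesis unfolding c_def by simp
qed


lemma g2_decomp:
  fixes z w :: complex
  assumes "z \<noteq> 0"
  shows "w = (complex_of_real ((Re z * Re w + Im z * Im w) / (cmod z)^2)
             + \<i> * complex_of_real ((Re z * Im w - Im z * Re w) / (cmod z)^3 * cmod z)) * z"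
proof -
  have n: "(cmod z)^2 = (Re z)^2 + (Im z)^2" by (rule cmod_power2)
  have np: "(Re z)^2 + (Im z)^2 > 0" using assms by (metis n zero_less_norm_iff zero_less_power)
  have c3: "(Re z * Im w - Im z * Re w) / (cmod z)^3 * cmod z = (Re z * Im w - Im z * Re w) / (cmod z)^2"
    using assms by (simp add: power2_eq_square power3_eq_cube field_simps)
  show ?thesis
  proof -
    have pos: "0 < Im z * Im z + Re z * Re z" using np by (simp add: power2_eq_square add.commute)
    then have nz: "Im z * Im z + Re z * Re z \<noteq> 0" by linarith
    show ?thesis unfolding c3 n
      apply (simp add: complex_eq_iff power2_eq_square add_divide_distrib[symmetric])
      using nz by (simp add: field_simps)
  qed
qed

lemma cis_vec_deriv:
  assumes "(f has_real_derivative f') (at t within S)"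
  shows "((\<lambda>t. cis (f t)) has_vector_derivative (\<i> * complex_of_real f' * cis (f t))) (at t within S)"
  unfolding has_vector_derivative_complex_iff
  using assms by (auto intro!: derivative_eq_intros)


lemma curve_setup:
  assumes C: "convex_C2_curve g g1 g2 a b"
  obtains G u T0 where "angsetup G u (\<lambda>t. cmod (g1 t)) (curvature g1 g2) a b"
    "u a = 0" "u b = total_curvature g1 g2 a b" "cmod T0 = 1" "\<forall>t\<in>{a..b}. G t = g t * cnj T0"
proof -
  from C have ab: "a < b"
    and d1: "\<forall>t\<in>{a..b}. (g has_vector_derivative g1 t) (at t within {a..b})"
    and d2: "\<forall>t\<in>{a..b}. (g1 has_vector_derivative g2 t) (at t within {a..b})"
    and cg2: "continuous_on {a..b} g2"
    and nz: "\<forall>t\<in>{a..b}. g1 t \<noteq> 0 \<and> g2 t \<noteq> 0"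
    and kpos: "\<forall>t\<in>{a..b}. curvature g1 g2 t > 0"
    unfolding convex_C2_curve_def by auto
  have cg1: "continuous_on {a..b} g1"
    using d2 has_vector_derivative_continuous continuous_on_eq_continuous_within by blast
  define sp where "sp = (\<lambda>t. cmod (g1 t))"
  define k where "k = curvature g1 g2"
  have nz1: "\<forall>t\<in>{a..b}. cmod (g1 t) \<noteq> 0" using nz by auto
  have nz3: "\<forall>t\<in>{a..b}. (cmod (g1 t))^3 \<noteq> 0" using nz by auto
  have nz2: "\<forall>t\<in>{a..b}. (cmod (g1 t))^2 \<noteq> 0" using nz by auto
  have ck: "continuous_on {a..b} (\<lambda>t. k t * sp t)"
    unfolding k_def sp_def curvature_def
    by (intro continuous_intros cg1 cg2 nz3)
  define lam where "lam = (\<lambda>t. (Re (g1 t) * Re (g2 t) + Im (g1 t) * Im (g2 t)) / (cmod (g1 t))^2)"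
  have clam: "continuous_on {a..b} lam"
    unfolding lam_def by (intro continuous_intros cg1 cg2 nz2)
  define u where "u = (\<lambda>t. integral {a..t} (\<lambda>s. k s * sp s))"
  define Lam where "Lam = (\<lambda>t. integral {a..t} lam)"
  have du: "(u has_real_derivative (k t * sp t)) (at t within {a..b})" if "t \<in> {a..b}" for t
    unfolding u_def has_real_derivative_iff_has_vector_derivative
    by (rule integral_has_vector_derivative[OF ck that])
  have dLam: "(Lam has_real_derivative (lam t)) (at t within {a..b})" if "t \<in> {a..b}" for t
    unfolding Lam_def has_real_derivative_iff_has_vector_derivative
    by (rule integral_has_vector_derivative[OF clam that])
  define E where "E = (\<lambda>t. g1 t * cis (- u t) * complex_of_real (exp (- Lam t)))"
  have dE: "(E has_vector_derivative 0) (at t within {a..b})" if t: "t \<in> {a..b}" for t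
  proof -
    have c1: "((\<lambda>t. cis (- u t)) has_vector_derivative (\<i> * complex_of_real (- (k t * sp t)) * cis (- u t))) (at t within {a..b})"
      by (rule cis_vec_deriv) (auto intro!: derivative_eq_intros du[OF t])
    have c2: "((\<lambda>t. complex_of_real (exp (- Lam t))) has_vector_derivative complex_of_real (exp (- Lam t) * (- lam t))) (at t within {a..b})"
      by (rule has_vector_derivative_of_real) (auto intro!: derivative_eq_intros dLam[OF t])
    have c3: "((\<lambda>t. g1 t * cis (- u t)) has_vector_derivative (g1 t * (\<i> * complex_of_real (- (k t * sp t)) * cis (- u t)) + g2 t * cis (- u t))) (at t within {a..b})"
      by (rule has_vector_derivative_mult[OF _ c1]) (use d2 t in auto)
    have c4: "(E has_vector_derivative (g1 t * cis (- u t) * complex_of_real (exp (- Lam t) * (- lam t)) + (g1 t * (\<i> * complex_of_real (- (k t * sp t)) * cis (- u t)) + g2 t * cis (- u t)) * complex_of_real (exp (- Lam t)))) (at t within {a..b})"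
      unfolding E_def by (rule has_vector_derivative_mult[OF c3 c2])
    have g2e: "g2 t = (complex_of_real (lam t) + \<i> * complex_of_real (k t * sp t)) * g1 t"
      using g2_decomp[of "g1 t" "g2 t"] nz t unfolding lam_def k_def sp_def curvature_def by auto
    have "g1 t * cis (- u t) * complex_of_real (exp (- Lam t) * (- lam t)) + (g1 t * (\<i> * complex_of_real (- (k t * sp t)) * cis (- u t)) + g2 t * cis (- u t)) * complex_of_real (exp (- Lam t)) = 0"
      unfolding g2e by (simp add: algebra_simps)
    with c4 show ?thesis by simp
  qed
  have "\<exists>C. \<forall>t\<in>{a..b}. E t = C"
    by (rule has_derivative_zero_constant[of "{a..b}" E]) (use dE in \<open>auto simp: has_vector_derivative_def\<close>)
  then obtain C0 where C0: "\<forall>t\<in>{a..b}. E t = C0" by blast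
  have u0: "u a = 0" and L0: "Lam a = 0" unfolding u_def Lam_def by auto
  have "E a = g1 a" unfolding E_def u0 L0 by simp
  then have Et: "E t = g1 a" if "t \<in> {a..b}" for t using C0 that ab by auto
  have g1e: "g1 t = g1 a * cis (u t) * complex_of_real (exp (Lam t))" if "t \<in> {a..b}" for t
  proof -
    have "g1 t * cis (- u t) * complex_of_real (exp (- Lam t)) = g1 a" using Et[OF that] unfolding E_def .
    then have "g1 t * cis (- u t) * complex_of_real (exp (- Lam t)) * (cis (u t) * complex_of_real (exp (Lam t))) = g1 a * (cis (u t) * complex_of_real (exp (Lam t)))"
      by simp
    moreover have "cis (- u t) * cis (u t) = 1" by (simp add: cis_mult)
    moreover have "complex_of_real (exp (- Lam t)) * complex_of_real (exp (Lam t)) = 1"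
      by (simp flip: of_real_mult add: exp_minus)
    ultimately show ?thesis by (simp add: algebra_simps) (metis mult.assoc mult.left_commute mult_1_right)
  qed
  define T0 where "T0 = g1 a / complex_of_real (cmod (g1 a))"
  have a_in: "a \<in> {a..b}" using ab by auto
  have ga: "cmod (g1 a) \<noteq> 0" using nz a_in by auto
  have T0n: "cmod T0 = 1" unfolding T0_def using ga by (simp add: norm_divide)
  have g1T: "g1 t = complex_of_real (sp t) * T0 * cis (u t)" if "t \<in> {a..b}" for t
  proof -
    have "sp t = cmod (g1 a) * exp (Lam t)" unfolding sp_def g1e[OF that] by (simp add: norm_mult)
    then show ?thesis unfolding T0_def g1e[OF that] using ga by (simp add: field_simps)
  qed
  have TT: "T0 * cnj T0 = 1" using T0n by (simp add: complex_norm_square[symmetric])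
  define G where "G = (\<lambda>t. g t * cnj T0)"
  have dG: "(G has_vector_derivative (complex_of_real (sp t) * cis (u t))) (at t within {a..b})" if "t \<in> {a..b}" for t
  proof -
    have "(G has_vector_derivative (g1 t * cnj T0)) (at t within {a..b})"
      unfolding G_def by (rule has_vector_derivative_mult_left) (use d1 that in auto)
    moreover have "g1 t * cnj T0 = complex_of_real (sp t) * cis (u t)"
      unfolding g1T[OF that] using TT by (simp add: algebra_simps)
    ultimately show ?thesis by simp
  qed
  have "angsetup G u (\<lambda>t. cmod (g1 t)) (curvature g1 g2) a b"
    unfolding angsetup_def using dG du kpos nz1 unfolding sp_def k_def by auto
  moreover have "u b = total_curvature g1 g2 a b"
    unfolding u_def total_curvature_def k_def sp_def by simp
  ultimately show ?thesis using that[of G u T0] u0 T0n unfolding G_def by auto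
qed


lemma sin_pos_range: "- pi \<le> x \<Longrightarrow> x < pi \<Longrightarrow> sin x > 0 \<Longrightarrow> 0 < x"
proof (rule ccontr)
  assume "- pi \<le> x" "x < pi" "sin x > 0" "\<not> 0 < x"
  then have "sin (-x) \<ge> 0" by (intro sin_ge_zero) auto
  then show False using \<open>sin x > 0\<close> by simp
qed

lemma chord_angle:
  assumes S: "angsetup G ph sp k a b" and ab: "a \<le> ta" "ta < tb" "tb \<le> b"
    and D: "ph tb - ph ta < pi" and ne: "G tb \<noteq> G ta"
  obtains L \<beta> where "L > 0" "0 < \<beta>" "\<beta> < ph tb - ph ta"
    "G tb - G ta = complex_of_real L * cis (ph tb - \<beta>)"
proof -
  define Z where "Z = (G tb - G ta) * cis (- ph tb)"
  define L where "L = cmod (G tb - G ta)"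
  define \<beta> where "\<beta> = - Arg Z"
  have L0: "L > 0" unfolding L_def using ne by simp
  have cZ: "cmod Z = L" unfolding Z_def L_def by (simp add: norm_mult)
  have "Z = complex_of_real L * cis (- \<beta>)"
    using rcis_cmod_Arg[of Z] unfolding \<beta>_def cZ rcis_def by simp
  then have "G tb - G ta = complex_of_real L * cis (- \<beta>) * cis (ph tb)"
    unfolding Z_def by (metis cis_divide cis_zero diff_0 divide_eq_eq cis_neq_zero mult_1_right times_divide_eq_right)
  then have ch: "G tb - G ta = complex_of_real L * cis (ph tb - \<beta>)"
    by (simp add: mult.assoc cis_mult)
  from chord_ori[OF S ab D ch L0] have s: "sin \<beta> > 0" "sin (ph tb - ph ta - \<beta>) > 0" by auto
  have br: "- pi \<le> \<beta>" "\<beta> < pi" using Arg_bounded[of Z] unfolding \<beta>_def by auto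
  have b0: "0 < \<beta>" using sin_pos_range[OF br s(1)] .
  have "ph ta < ph tb" using angsetup_ph_strict[OF S ab] .
  then have "0 < ph tb - ph ta - \<beta>" using sin_pos_range[OF _ _ s(2)] br D b0 by auto
  then show ?thesis using that[OF L0 b0 _ ch] by simp
qed

lemma circle_rel:
  fixes L R e \<alpha> :: real
  assumes "cmod (complex_of_real L * cis \<alpha> - complex_of_real R * \<i> * cis e) = R" "L > 0"
  shows "L = 2 * R * sin (\<alpha> - e)"
proof -
  have "(cmod (complex_of_real L * cis \<alpha> - complex_of_real R * \<i> * cis e))^2 = R^2" using assms by simp
  then have 1: "(L * cos \<alpha> + R * sin e)^2 + (L * sin \<alpha> - R * cos e)^2 = R^2"
    by (simp add: cmod_power2)
  have 2: "(L * cos \<alpha> + R * sin e)^2 + (L * sin \<alpha> - R * cos e)^2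
      = L^2 * ((sin \<alpha>)^2 + (cos \<alpha>)^2) + R^2 * ((sin e)^2 + (cos e)^2) - 2 * L * R * (sin \<alpha> * cos e - cos \<alpha> * sin e)"
    by algebra
  have "L^2 = 2 * L * R * sin (\<alpha> - e)" using 1 2 by (simp add: sin_diff)
  then have "L * L = L * (2 * R * sin (\<alpha> - e))" by (simp add: power2_eq_square algebra_simps)
  then show ?thesis using assms(2) by simp
qed

lemma sort3_aux:
  "t1 < t2 \<Longrightarrow> t2 < t3 \<Longrightarrow> P t1 \<Longrightarrow> P t2 \<Longrightarrow> P t3 \<Longrightarrow> f t1 \<noteq> f t2 \<Longrightarrow> f t2 \<noteq> f t3 \<Longrightarrow> f t1 \<noteq> f t3
   \<Longrightarrow> \<exists>t1 t2 t3::real. t1 < t2 \<and> t2 < t3 \<and> P t1 \<and> P t2 \<and> P t3 \<and> f t1 \<noteq> f t2 \<and> f t2 \<noteq> f t3 \<and> f t1 \<noteq> f t3"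
  by blast

lemma sort3:
  fixes x y z :: real
  assumes "P x" "P y" "P z" "f x \<noteq> f y" "f x \<noteq> f z" "f y \<noteq> f z"
  shows "\<exists>t1 t2 t3. t1 < t2 \<and> t2 < t3 \<and> P t1 \<and> P t2 \<and> P t3 \<and> f t1 \<noteq> f t2 \<and> f t2 \<noteq> f t3 \<and> f t1 \<noteq> f t3"
proof -
  have d: "x \<noteq> y" "x \<noteq> z" "y \<noteq> z" using assms by auto
  have s: "f y \<noteq> f x" "f z \<noteq> f x" "f z \<noteq> f y" using assms by auto
  show ?thesis
  proof (cases "x < y")
    case xy: True
    show ?thesis
    proof (cases "y < z")
      case True then show ?thesis using sort3_aux[of x y z P f] xy assms s by blast
    next
      case False then have zy: "z < y" using d by simp
      show ?thesis
      proof (cases "x < z")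
        case True then show ?thesis using sort3_aux[of x z y P f] zy assms s by blast
      next
        case False then have "z < x" using d by simp
        then show ?thesis using sort3_aux[of z x y P f] xy assms s by blast
      qed
    qed
  next
    case False then have yx: "y < x" using d by simp
    show ?thesis
    proof (cases "x < z")
      case True then show ?thesis using sort3_aux[of y x z P f] yx assms s by blast
    next
      case False then have zx: "z < x" using d by simp
      show ?thesis
      proof (cases "y < z")
        case True then show ?thesis using sort3_aux[of y z x P f] zx assms s by blast
      next
        case False then have "z < y" using d by simp
        then show ?thesis using sort3_aux[of z y x P f] yx assms s by blast
      qed
    qed
  qed
qed


lemma curv_cont:
  assumes C: "convex_C2_curve g g1 g2 a b"
  shows "continuous_on {a..b} (curvature g1 g2)"
proof -
  from C have d2: "\<forall>t\<in>{a..b}. (g1 has_vector_derivative g2 t) (at t within {a..b})"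
    and cg2: "continuous_on {a..b} g2"
    and nz: "\<forall>t\<in>{a..b}. g1 t \<noteq> 0 \<and> g2 t \<noteq> 0"
    unfolding convex_C2_curve_def by auto
  have cg1: "continuous_on {a..b} g1"
    using d2 has_vector_derivative_continuous continuous_on_eq_continuous_within by blast
  have nz3: "\<forall>t\<in>{a..b}. (cmod (g1 t))^3 \<noteq> 0" using nz by auto
  show ?thesis unfolding curvature_def by (intro continuous_intros cg1 cg2 nz3)
qed

lemma sign_dichotomy:
  fixes f :: "real \<Rightarrow> real"
  assumes "continuous_on {a..b} f" "\<forall>t\<in>{a..b}. f t \<noteq> 1"
  shows "(\<forall>t\<in>{a..b}. f t < 1) \<or> (\<forall>t\<in>{a..b}. f t > 1)"
proof (rule ccontr)
  assume "\<not> ?thesis"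
  then obtain x y where x: "x \<in> {a..b}" "f x \<ge> 1" and y: "y \<in> {a..b}" "f y \<le> 1" by force
  show False
  proof (cases "x \<le> y")
    case True
    have "continuous_on {x..y} f" using assms(1) by (rule continuous_on_subset) (use x y in auto)
    then obtain z where "x \<le> z" "z \<le> y" "f z = 1" using IVT2'[of f y 1 x] x y True by auto
    then show False using assms(2) x y by auto
  next
    case False
    have "continuous_on {y..x} f" using assms(1) by (rule continuous_on_subset) (use x y in auto)
    then obtain z where "y \<le> z" "z \<le> x" "f z = 1" using IVT'[of f y 1 x] x y False by auto
    then show False using assms(2) x y by auto
  qed
qed

theorem theorem4p8:
  fixes g g1 g2 :: "real \<Rightarrow> complex" and a b R :: real and c :: complex
  assumes "convex_C2_curve g g1 g2 a b"
    and "total_curvature g1 g2 a b \<le> pi"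
    and "R > 0"
    and "\<exists>p q r. p \<in> g ` {a..b} \<inter> sphere c R \<and> q \<in> g ` {a..b} \<inter> sphere c R \<and>
                 r \<in> g ` {a..b} \<inter> sphere c R \<and> p \<noteq> q \<and> p \<noteq> r \<and> q \<noteq> r"
  shows "\<exists>t\<in>{a..b}. curvature g1 g2 t = 1 / R"
proof (rule ccontr)
  assume H: "\<not> (\<exists>t\<in>{a..b}. curvature g1 g2 t = 1 / R)"
  obtain G u T0 where S: "angsetup G u (\<lambda>t. cmod (g1 t)) (curvature g1 g2) a b"
    and u0: "u a = 0" and ub: "u b = total_curvature g1 g2 a b" and T0: "cmod T0 = 1"
    and Gd: "\<forall>t\<in>{a..b}. G t = g t * cnj T0"
    using curve_setup[OF assms(1)] by blast
  define P where "P = (\<lambda>t. t \<in> {a..b} \<and> dist c (g t) = R)"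
  from assms(4) obtain p q r where pqr: "p \<in> g ` {a..b} \<inter> sphere c R" "q \<in> g ` {a..b} \<inter> sphere c R"
    "r \<in> g ` {a..b} \<inter> sphere c R" "p \<noteq> q" "p \<noteq> r" "q \<noteq> r" by blast
  obtain tp where tp: "tp \<in> {a..b}" "g tp = p" using pqr(1) by auto
  obtain tq where tq: "tq \<in> {a..b}" "g tq = q" using pqr(2) by auto
  obtain tr where tr: "tr \<in> {a..b}" "g tr = r" using pqr(3) by auto
  have "P tp" "P tq" "P tr" unfolding P_def using tp tq tr pqr by auto
  then obtain t1 t2 t3 where t: "t1 < t2" "t2 < t3" "P t1" "P t2" "P t3"
    "g t1 \<noteq> g t2" "g t2 \<noteq> g t3" "g t1 \<noteq> g t3"
    using sort3[of P tp tq tr g] tp tq tr pqr by blast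
  have ti: "a \<le> t1" "t3 \<le> b" using t unfolding P_def by auto
  have dR: "cmod (g ti - c) = R" if "P ti" for ti
    using that unfolding P_def by (simp add: dist_norm norm_minus_commute)
  have T0nz: "cnj T0 \<noteq> 0" using T0 by auto
  have Gn: "G ti \<noteq> G tj" if "g ti \<noteq> g tj" "P ti" "P tj" for ti tj
    using that Gd T0nz unfolding P_def by auto
  have kc: "continuous_on {a..b} (\<lambda>t. R * curvature g1 g2 t)"
    using curv_cont[OF assms(1)] by (intro continuous_intros)
  have kn: "\<forall>t\<in>{a..b}. R * curvature g1 g2 t \<noteq> 1"
    using H assms(3) by (auto simp: field_simps)
  have dich: "(\<forall>t\<in>{a..b}. R * curvature g1 g2 t < 1) \<or> (\<forall>t\<in>{a..b}. R * curvature g1 g2 t > 1)"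
    by (rule sign_dichotomy[OF kc kn])
  have u12: "u t1 < u t2" using angsetup_ph_strict[OF S, of t1 t2] t ti by auto
  have u23: "u t2 < u t3" using angsetup_ph_strict[OF S, of t2 t3] t ti by auto
  have ua: "u a \<le> u t1"
  proof (cases "a < t1")
    case True then show ?thesis using angsetup_ph_strict[OF S, of a t1] t ti by auto
  next
    case False then show ?thesis using ti by auto
  qed
  have ubb: "u t3 \<le> u b"
  proof (cases "t3 < b")
    case True then show ?thesis using angsetup_ph_strict[OF S, of t3 b] t ti by auto
  next
    case False then show ?thesis using ti by auto
  qed
  define d1 where "d1 = u t2 - u t1"
  define d2 where "d2 = u t3 - u t2"
  have dd: "0 < d1" "0 < d2" "d1 + d2 \<le> pi"
    using u12 u23 ua ubb u0 ub assms(2) unfolding d1_def d2_def by auto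
  have ab1: "a \<le> t1" "t1 < t2" "t2 \<le> b" using t ti by auto
  have ab2: "a \<le> t2" "t2 < t3" "t3 \<le> b" using t ti by auto
  have D1: "u t2 - u t1 < pi" using dd unfolding d1_def d2_def by auto
  have D2: "u t3 - u t2 < pi" using dd unfolding d1_def d2_def by auto
  obtain L1 b1 where c1: "L1 > 0" "0 < b1" "b1 < u t2 - u t1"
    "G t2 - G t1 = complex_of_real L1 * cis (u t2 - b1)"
    using chord_angle[OF S ab1 D1 Gn[OF t(6)[symmetric] t(4) t(3)]] by blast
  obtain L2 b2' where c2: "L2 > 0" "0 < b2'" "b2' < u t3 - u t2"
    "G t3 - G t2 = complex_of_real L2 * cis (u t3 - b2')"
    using chord_angle[OF S ab2 D2 Gn[OF t(7)[symmetric] t(5) t(4)]] by blast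
  define b2 where "b2 = d2 - b2'"
  define C' where "C' = c * cnj T0"
  have GC: "cmod (G ti - C') = R" if "P ti" for ti
  proof -
    have "G ti - C' = (g ti - c) * cnj T0" using that Gd unfolding P_def C'_def by (auto simp: algebra_simps)
    then show ?thesis using dR[OF that] T0 by (simp add: norm_mult)
  qed
  define W where "W = (C' - G t2) * cis (- u t2)"
  have Wn: "cmod W = R" unfolding W_def using GC[OF t(4)] by (simp add: norm_mult norm_minus_commute)
  define e where "e = Arg W - pi/2"
  have We: "W = complex_of_real R * \<i> * cis e"
  proof -
    have "W = complex_of_real R * cis (Arg W)" using rcis_cmod_Arg[of W] unfolding Wn rcis_def by simp
    also have "cis (Arg W) = \<i> * cis e" unfolding e_def cis_pi_half[symmetric] cis_mult by simp
    finally show ?thesis by (simp add: mult.assoc)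
  qed
  have z1: "(G t1 - G t2) * cis (- u t2) = complex_of_real L1 * cis (pi - b1)"
  proof -
    have "(G t1 - G t2) * cis (- u t2) = - (complex_of_real L1 * (cis (u t2 - b1) * cis (- u t2)))"
      using c1(4) by (simp add: algebra_simps)
    also have "\<dots> = complex_of_real L1 * (- cis (- b1))" by (simp add: cis_mult)
    also have "- cis (- b1) = cis (pi - b1)" by (simp add: minus_cis)
    finally show ?thesis by simp
  qed
  have "cmod ((G t1 - G t2) * cis (- u t2) - W) = R"
  proof -
    have "(G t1 - G t2) * cis (- u t2) - W = (G t1 - C') * cis (- u t2)" unfolding W_def by (simp add: algebra_simps)
    then show ?thesis using GC[OF t(3)] by (simp add: norm_mult)
  qed
  then have "L1 = 2 * R * sin (pi - b1 - e)" using circle_rel[of L1 "pi - b1" R e] c1(1) unfolding z1 We by simp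
  moreover have "sin (pi - b1 - e) = sin (b1 + e)"
    using sin_pi_minus[of "b1 + e"] by (simp add: algebra_simps)
  ultimately have L1e: "L1 = 2 * R * sin (b1 + e)" by simp
  have z3: "(G t3 - G t2) * cis (- u t2) = complex_of_real L2 * cis b2"
  proof -
    have "(G t3 - G t2) * cis (- u t2) = complex_of_real L2 * (cis (u t3 - b2') * cis (- u t2))"
      using c2(4) by (simp add: algebra_simps)
    also have "cis (u t3 - b2') * cis (- u t2) = cis b2" unfolding b2_def d2_def cis_mult
      by (rule arg_cong[where f=cis]) simp
    finally show ?thesis .
  qed
  have "cmod ((G t3 - G t2) * cis (- u t2) - W) = R"
  proof -
    have "(G t3 - G t2) * cis (- u t2) - W = (G t3 - C') * cis (- u t2)" unfolding W_def by (simp add: algebra_simps)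
    then show ?thesis using GC[OF t(5)] by (simp add: norm_mult)
  qed
  then have L2e: "L2 = 2 * R * sin (b2 - e)" using circle_rel[of L2 b2 R e] c2(1) unfolding z3 We by simp
  have b1r: "0 < b1" "b1 < d1" using c1 unfolding d1_def by auto
  have b2r: "0 < b2" "b2 < d2" using c2 unfolding b2_def d2_def by auto
  have db2: "d2 - b2 = b2'" unfolding b2_def by simp
  from dich show False
  proof
    assume flat: "\<forall>t\<in>{a..b}. R * curvature g1 g2 t < 1"
    have F1: "L1 * sin (d1 - b1) > R * (1 - cos d1)"
      using chord_flat[OF S ab1 D1 c1(4) flat] unfolding d1_def by auto
    have F2': "L2 * sin b2' > R * (1 - cos d2)"
      using chord_flat[OF S ab2 D2 c2(4) flat] unfolding d2_def by auto
    then have F2: "L2 * sin (d2 - b2) > R * (1 - cos d2)" unfolding db2 .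
    show False
      by (rule flat_final[OF dd b1r b2r assms(3) L1e L2e c1(1) c2(1) F1 F2])
  next
    assume steep: "\<forall>t\<in>{a..b}. R * curvature g1 g2 t > 1"
    have S1: "L1 < 2 * R * sin b1" if "cos b1 \<ge> 0"
      using chord_steep_end[OF S ab1 D1 c1(4) steep assms(3) c1(2) c1(3) that] .
    have S2: "L1 < 2 * R * sin (d1 - b1)" if "cos (d1 - b1) \<ge> 0"
      using chord_steep_start[OF S ab1 D1 c1(4) steep assms(3) c1(2) c1(3)] that unfolding d1_def by auto
    have S3: "L2 < 2 * R * sin b2" if "cos b2 \<ge> 0"
      using chord_steep_start[OF S ab2 D2 c2(4) steep assms(3) c2(2) c2(3)] that unfolding b2_def d2_def by auto
    have S4: "L2 < 2 * R * sin (d2 - b2)" if "cos (d2 - b2) \<ge> 0"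
    proof -
      have "cos b2' \<ge> 0" using that unfolding db2 .
      then have "L2 < 2 * R * sin b2'" using chord_steep_end[OF S ab2 D2 c2(4) steep assms(3) c2(2) c2(3)] by auto
      then show ?thesis unfolding db2 .
    qed
    show False
      by (rule steep_final[OF dd b1r b2r assms(3) L1e L2e c1(1) c2(1) S1 S2 S3 S4])
  qed
qed

end
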